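(* Consider, in the Cartesian plane, two attackers $A1$, $A2$ and two targets $T1$, $T2$, each moving with constant speed along a straight line. The attackers have equal speed $v_{A1}=v_{A2}$, the targets have equal speed $v_{T1}=v_{T2}$, and the targets are slower than the attackers. The coordinate frame is chosen so that the $x$-axis is the line through the positions of $A1$ and $A2$ and the $y$-axis is the perpendicular bisector of the segment $\overline{A1A2}$; in particular $y_{A1}=y_{A2}=0$. Attacker $A1$ pursues $T1$ and $A2$ pursues $T2$, with $x_{T1}>0$ and $x_{T2}<0$. Let $\gamma_{A2T2}=v_{T2}/v_{A2}$ and let the $A2$–$T2$ Apollonius circle be the circle with center $$\left(\frac{x_{T2}-\gamma_{A2T2}^2x_{A2}}{1-\gamma_{A2T2}^2},\ \frac{y_{T2}}{1-\gamma_{A2T2}^2}\right)$$ and radius $$\frac{\gamma_{A2T2}\sqrt{(x_{T2}-x_{A2})^2+y_{T2}^2}}{1-\gamma_{A2T2}^2}.$$ Then the attacker $A1$ will collide with the attacker $A2$ only if the $A2$–$T2$ Apollonius circle intercepts the $y$-axis.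
   Context: This is a pursuit–evasion game between two targets and two attackers. Each attacker individually pursues its designated target, and the two targets cooperate to try to make the attackers collide with each other. The $A2$–$T2$ Apollonius circle is the locus of points that $A2$ and $T2$ can reach simultaneously when both move at constant speed in straight lines. The $y$-axis of the chosen frame is the locus of points that $A1$ and $A2$ can reach simultaneously. *)

theory Defs
  imports Complex_Main
begin

text \<open>Apollonius circle of an attacker at (xA, 0) and a target at (xT, yT),
  speed ratio gamma = vT / vA.\<close>

definition apollonius_cx :: "real \<Rightarrow> real \<Rightarrow> real \<Rightarrow> real" where
  "apollonius_cx \<gamma> xA xT = (xT - \<gamma>\<^sup>2 * xA) / (1 - \<gamma>\<^sup>2)"

definition apollonius_cy :: "real \<Rightarrow> real \<Rightarrow> real" where
  "apollonius_cy \<gamma> yT = yT / (1 - \<gamma>\<^sup>2)"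

definition apollonius_r :: "real \<Rightarrow> real \<Rightarrow> real \<Rightarrow> real \<Rightarrow> real" where
  "apollonius_r \<gamma> xA xT yT = \<gamma> * sqrt ((xT - xA)\<^sup>2 + yT\<^sup>2) / (1 - \<gamma>\<^sup>2)"

definition apollonius_meets_y_axis :: "real \<Rightarrow> real \<Rightarrow> real \<Rightarrow> real \<Rightarrow> bool" where
  "apollonius_meets_y_axis \<gamma> xA xT yT \<longleftrightarrow>
     (\<exists>y. (0 - apollonius_cx \<gamma> xA xT)\<^sup>2 + (y - apollonius_cy \<gamma> yT)\<^sup>2
            = (apollonius_r \<gamma> xA xT yT)\<^sup>2)"

end

theory Submission
  imports Defs
begin

lemma meets_iff:
  assumes "apollonius_cx g xA xT ^ 2 \<le> apollonius_r g xA xT yT ^ 2"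
  shows "apollonius_meets_y_axis g xA xT yT"
proof -
  let ?cx = "apollonius_cx g xA xT" and ?cy = "apollonius_cy g yT" and ?r = "apollonius_r g xA xT yT"
  have "(0 - ?cx)\<^sup>2 + (?cy + sqrt (?r\<^sup>2 - ?cx\<^sup>2) - ?cy)\<^sup>2 = ?r\<^sup>2"
    using assms by simp
  then show ?thesis unfolding apollonius_meets_y_axis_def by blast
qed

lemma iden_aux:
  fixes G k xT xA yT y :: real
  assumes "k = 1 - G" "k \<noteq> 0"
  shows "xT\<^sup>2 + (y - yT)\<^sup>2 - G * (xA\<^sup>2 + y\<^sup>2)
     = k * (((xT - G * xA) / k)\<^sup>2 + (y - yT / k)\<^sup>2 - G * ((xT - xA)\<^sup>2 + yT\<^sup>2) / k\<^sup>2)"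
proof -
  have e1: "((xT - G * xA) / k)\<^sup>2 = (xT - G * xA)\<^sup>2 / k\<^sup>2" by (simp add: power_divide)
  have e2: "(y - yT / k)\<^sup>2 = (k * y - yT)\<^sup>2 / k\<^sup>2" using assms(2) by (simp add: power_divide field_simps)
  have "k * ((xT - G * xA)\<^sup>2 / k\<^sup>2 + (k * y - yT)\<^sup>2 / k\<^sup>2 - G * ((xT - xA)\<^sup>2 + yT\<^sup>2) / k\<^sup>2)
      = ((xT - G * xA)\<^sup>2 + (k * y - yT)\<^sup>2 - G * ((xT - xA)\<^sup>2 + yT\<^sup>2)) / k"
    using assms(2) by (simp add: field_simps power2_eq_square)
  also have "\<dots> = xT\<^sup>2 + (y - yT)\<^sup>2 - G * (xA\<^sup>2 + y\<^sup>2)"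
  proof -
    have "(xT - G * xA)\<^sup>2 + (k * y - yT)\<^sup>2 - G * ((xT - xA)\<^sup>2 + yT\<^sup>2)
        = k * (xT\<^sup>2 + (y - yT)\<^sup>2 - G * (xA\<^sup>2 + y\<^sup>2))"
      unfolding assms(1) by (simp add: power2_eq_square algebra_simps)
    then show ?thesis using assms(2) by simp
  qed
  finally show ?thesis using e1 e2 by simp
qed

theorem lemma3:
  fixes xA1 xA2 xT1 yT1 xT2 yT2 vA vT :: real
    and a1x a1y a2x a2y b1x b1y b2x b2y :: real
    and t1 t2 t :: real
  assumes speeds: "0 < vA" "0 \<le> vT" "vT < vA"
    and frame: "xA1 = - xA2" "xA2 < 0"
    and targets: "xT1 > 0" "xT2 < 0"
    and vel_A1: "a1x\<^sup>2 + a1y\<^sup>2 = vA\<^sup>2"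
    and vel_A2: "a2x\<^sup>2 + a2y\<^sup>2 = vA\<^sup>2"
    and vel_T1: "b1x\<^sup>2 + b1y\<^sup>2 = vT\<^sup>2"
    and vel_T2: "b2x\<^sup>2 + b2y\<^sup>2 = vT\<^sup>2"
    and capture1: "0 < t1" "xA1 + t1 * a1x = xT1 + t1 * b1x" "0 + t1 * a1y = yT1 + t1 * b1y"
    and capture2: "0 < t2" "xA2 + t2 * a2x = xT2 + t2 * b2x" "0 + t2 * a2y = yT2 + t2 * b2y"
    and collision: "0 \<le> t" "t \<le> t1" "t \<le> t2"
       "xA1 + t * a1x = xA2 + t * a2x" "0 + t * a1y = 0 + t * a2y"
  shows "apollonius_meets_y_axis (vT / vA) xA2 xT2 yT2"
proof -
  define g where "g = vT / vA"
  have g0: "0 \<le> g" and g1: "g < 1" using speeds by (auto simp: g_def field_simps)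
  define k where "k = 1 - g\<^sup>2"
  have k0: "0 < k" unfolding k_def using g0 g1
    by (simp add: power2_eq_square) (metis mult_le_one less_eq_real_def not_le order_less_le_trans zero_less_one mult_strict_mono' )
  have tpos: "t \<noteq> 0" using collision(4) frame by auto
  have ya: "a1y = a2y" using collision(5) tpos by simp
  have "a1x\<^sup>2 = a2x\<^sup>2" using vel_A1 vel_A2 ya by simp
  hence "a1x = a2x \<or> a1x = - a2x" by (simp add: power2_eq_iff)
  moreover have "a1x \<noteq> a2x" using collision(4) frame by auto
  ultimately have ax: "a1x = - a2x" by simp
  have Px: "t * a2x = - xA2" using collision(4) frame ax by (simp add: algebra_simps)
  have "t > 0" using tpos collision(1) by simp
  hence a2xpos: "a2x > 0" using Px frame
    by (metis neg_0_less_iff_less zero_less_mult_pos)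
  define cx2 where "cx2 = xA2 + t2 * a2x"
  define cy2 where "cy2 = t2 * a2y"
  have cx2: "cx2 \<ge> 0" unfolding cx2_def using Px collision(3) a2xpos
    by (smt (verit) mult_right_mono)
  have vTg: "vT = g * vA" using speeds by (simp add: g_def)
  have fC: "(cx2 - xT2)\<^sup>2 + (cy2 - yT2)\<^sup>2 = g\<^sup>2 * ((cx2 - xA2)\<^sup>2 + cy2\<^sup>2)"
  proof -
    have "(cx2 - xT2)\<^sup>2 + (cy2 - yT2)\<^sup>2 = t2\<^sup>2 * (b2x\<^sup>2 + b2y\<^sup>2)"
      using capture2 unfolding cx2_def cy2_def by (simp add: power2_eq_square algebra_simps)
    also have "\<dots> = g\<^sup>2 * (t2\<^sup>2 * (a2x\<^sup>2 + a2y\<^sup>2))" using vel_T2 vel_A2 vTg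
      by (simp add: power_mult_distrib)
    also have "\<dots> = g\<^sup>2 * ((cx2 - xA2)\<^sup>2 + cy2\<^sup>2)"
      unfolding cx2_def cy2_def by (simp add: power2_eq_square algebra_simps)
    finally show ?thesis .
  qed
  define s where "s = - xT2 / (cx2 - xT2)"
  have den: "cx2 - xT2 > 0" using cx2 targets by simp
  have s0: "0 \<le> s" and s1: "s \<le> 1" using den cx2 targets by (auto simp: s_def field_simps)
  define Dx where "Dx = cx2 - xT2"
  define Dy where "Dy = cy2 - yT2"
  define y0 where "y0 = yT2 + s * Dy"
  have Qx: "xT2 + s * Dx = 0" using den by (simp add: s_def Dx_def field_simps)
  define f where "f = (\<lambda>x y. (x - xT2)\<^sup>2 + (y - yT2)\<^sup>2 - g\<^sup>2 * ((x - xA2)\<^sup>2 + y\<^sup>2))"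
  define h where "h = (\<lambda>u. f (xT2 + u * Dx) (yT2 + u * Dy))"
  have hq: "h u = f xT2 yT2 + u * (- 2 * g\<^sup>2 * ((xT2 - xA2) * Dx + yT2 * Dy))
           + u\<^sup>2 * (k * (Dx\<^sup>2 + Dy\<^sup>2))" for u
    unfolding h_def f_def k_def by (simp add: power2_eq_square algebra_simps)
  have h1: "h 1 = 0" using fC unfolding h_def f_def Dx_def Dy_def by simp
  have h0: "h 0 \<le> 0" unfolding h_def f_def by simp
  have conv: "h s \<le> (1 - s) * h 0 + s * h 1"
  proof -
    have "h s - ((1 - s) * h 0 + s * h 1) = (s\<^sup>2 - s) * (k * (Dx\<^sup>2 + Dy\<^sup>2))"
      unfolding hq by (simp add: power2_eq_square algebra_simps)
    moreover have "(s\<^sup>2 - s) \<le> 0" using s0 s1 mult_left_le[of s s] by (simp add: power2_eq_square)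
    moreover have "k * (Dx\<^sup>2 + Dy\<^sup>2) \<ge> 0" using k0 by simp
    ultimately show ?thesis by (smt (verit) mult_nonpos_nonneg)
  qed
  have fQ: "f 0 y0 \<le> 0"
  proof -
    have "h s \<le> 0" using conv h0 h1 s0 s1 by (smt (verit) mult_nonneg_nonpos)
    then show ?thesis unfolding h_def y0_def using Qx by simp
  qed
  let ?cx = "apollonius_cx g xA2 xT2" and ?cy = "apollonius_cy g yT2" and ?r = "apollonius_r g xA2 xT2 yT2"
  have rr: "?r\<^sup>2 = g\<^sup>2 * ((xT2 - xA2)\<^sup>2 + yT2\<^sup>2) / k\<^sup>2"
    unfolding apollonius_r_def k_def[symmetric] by (simp add: power_divide power_mult_distrib)
  have iden: "f 0 y0 = k * (?cx\<^sup>2 + (y0 - ?cy)\<^sup>2 - ?r\<^sup>2)"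
    unfolding rr apollonius_cx_def apollonius_cy_def k_def[symmetric] f_def
    using iden_aux[where G="g\<^sup>2" and k=k and xT=xT2 and xA=xA2 and yT=yT2 and y=y0] k0 k_def by simp
  have "?cx\<^sup>2 + (y0 - ?cy)\<^sup>2 - ?r\<^sup>2 \<le> 0" using fQ iden k0
    by (simp add: mult_le_0_iff)
  hence "?cx\<^sup>2 \<le> ?r\<^sup>2" by (smt (verit) zero_le_power2)
  then show ?thesis using meets_iff g_def by simp
qed

end
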